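(* Let $s\ge 0$ be a fixed integer (independent of $N$). For every integer $N$ with $s<N-2$, set $n=N-s$ and let $\mathcal{X}_n=\{x_j\}_{j=0}^n$ be any subset with $n+1$ elements of the Chebyshev points of the second kind $\{\cos\frac{k\pi}{N}\}_{k=0}^N$, ordered so that $x_0>x_1>\dots>x_n$. Then the family $(\mathcal{X}_n)$ is a family of well-spaced points with constants $C=\frac{\pi^2(s+1)}{2}$ and $R=\frac{(s+1)(s+3)\pi^2}{4}$; that is, for every such $\mathcal{X}_n$: (1) $\frac{x_{k+1}-x_k}{x_{k+1}-x_j}\le \frac{C}{k+1-j}$ for $0\le j\le k$, $0\le k\le n-1$; (2) $\frac{x_{k+1}-x_k}{x_j-x_k}\le\frac{C}{j-k}$ for $k+1\le j\le n$, $0\le k\le n-1$; (3) $\frac1R\le \frac{x_{k+1}-x_k}{x_k-x_{k-1}}\le R$ for $1\le k\le n-1$. Moreover, the Lebesgue constant of Berrut's rational interpolant on $\mathcal{X}_n$ satisfies $$\Lambda_n\le\Big(\frac{(s+1)(s+3)\pi^2}{4}+1\Big)\big(1+\pi^2(s+1)\ln(N-s)\big).$$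
   Context: Berrut's rational interpolant on distinct nodes $x_0,\dots,x_n$ has basis functions $\ell_i(x)=\dfrac{(-1)^i/(x-x_i)}{\sum_{j=0}^n (-1)^j/(x-x_j)}$, $i=0,\dots,n$. Its Lebesgue constant on $[-1,1]$ is $\Lambda_n=\max_{x\in[-1,1]}\sum_{i=0}^n|\ell_i(x)|$. A family of ordered node sets $(\mathcal{X}_n)_n$ is called well-spaced if there exist constants $C,R\ge 1$ independent of $n$ such that conditions (1)–(3) in the claim hold for every set in the family. *)

theory Defs
  imports Complex_Main
begin

definition berrut_basis :: "(nat \<Rightarrow> real) \<Rightarrow> nat \<Rightarrow> nat \<Rightarrow> real \<Rightarrow> real" where
  "berrut_basis x n i t =
     ((-1) ^ i / (t - x i)) / (\<Sum>j=0..n. (-1) ^ j / (t - x j))"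

text \<open>Lebesgue function, for t not a node (at nodes the basis functions are
  extended by continuity; the supremum over non-nodes equals the maximum).\<close>
definition berrut_lebesgue_fun :: "(nat \<Rightarrow> real) \<Rightarrow> nat \<Rightarrow> real \<Rightarrow> real" where
  "berrut_lebesgue_fun x n t = (\<Sum>i=0..n. \<bar>berrut_basis x n i t\<bar>)"

definition berrut_lebesgue_const :: "(nat \<Rightarrow> real) \<Rightarrow> nat \<Rightarrow> real" where
  "berrut_lebesgue_const x n =
     Sup (berrut_lebesgue_fun x n ` ({-1..1} - x ` {0..n}))"

definition well_spaced_conds :: "real \<Rightarrow> real \<Rightarrow> (nat \<Rightarrow> real) \<Rightarrow> nat \<Rightarrow> bool" where
  "well_spaced_conds C R x n \<longleftrightarrow>
     (\<forall>k<n. \<forall>j\<le>k. (x (k+1) - x k) / (x (k+1) - x j) \<le> C / (real k + 1 - real j)) \<and>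
     (\<forall>k<n. \<forall>j. k+1 \<le> j \<and> j \<le> n \<longrightarrow> (x (k+1) - x k) / (x j - x k) \<le> C / (real j - real k)) \<and>
     (\<forall>k. 1 \<le> k \<and> k \<le> n-1 \<longrightarrow>
        1 / R \<le> (x (k+1) - x k) / (x k - x (k-1)) \<and> (x (k+1) - x k) / (x k - x (k-1)) \<le> R)"

end

theory Submission
  imports Defs "HOL-Analysis.Harmonic_Numbers"
begin


definition mu :: "real \<Rightarrow> real \<Rightarrow> real" where
  "mu a b = min ((a+b)/2) (pi - (a+b)/2)"

lemma jordan:
  fixes x :: real
  assumes "0 \<le> x" "x \<le> pi/2"
  shows "2 * x / pi \<le> sin x"
proof -
  define h where "h = (\<lambda>x::real. sin x - 2 * x / pi)"
  define x0 where "x0 = arccos (2/pi)"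
  have p2: "2/pi \<le> 1" "-1 \<le> 2/pi" using pi_ge_two by (auto simp: field_simps)
  have x0: "0 \<le> x0" "x0 \<le> pi" using arccos_lbound arccos_ubound p2 x0_def by auto
  have cx0: "cos x0 = 2/pi" using p2 x0_def by simp
  have x0le: "x0 \<le> pi/2"
  proof -
    have "0 \<le> cos x0" using cx0 by simp
    thus ?thesis using x0 cos_mono_le_eq[of "pi/2" x0] by simp
  qed
  have der: "\<And>u. (h has_real_derivative (cos u - 2/pi)) (at u)"
    unfolding h_def by (auto intro!: derivative_eq_intros)
  show ?thesis
  proof (cases "x \<le> x0")
    case True
    have "h 0 \<le> h x"
    proof (rule DERIV_nonneg_imp_nondecreasing[OF assms(1)])
      fix u assume u: "0 \<le> u" "u \<le> x"
      have "cos x0 \<le> cos u" using u True x0 by (intro cos_monotone_0_pi_le) auto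
      thus "\<exists>y. (h has_real_derivative y) (at u) \<and> 0 \<le> y" using der cx0 by force
    qed
    thus ?thesis by (simp add: h_def)
  next
    case False
    have "h (pi/2) \<le> h x"
    proof (rule DERIV_nonpos_imp_nonincreasing[OF assms(2)])
      fix u assume u: "x \<le> u" "u \<le> pi/2"
      have "cos u \<le> cos x0" using u False x0 by (intro cos_monotone_0_pi_le) auto
      thus "\<exists>y. (h has_real_derivative y) (at u) \<and> y \<le> 0" using der cx0 by force
    qed
    thus ?thesis by (simp add: h_def)
  qed
qed

lemma sin_mu:
  assumes "0 \<le> a" "a \<le> b" "b \<le> pi"
  shows "sin ((a+b)/2) = sin (mu a b)" "0 \<le> mu a b" "mu a b \<le> pi/2"
proof -
  show "sin ((a+b)/2) = sin (mu a b)"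
    unfolding mu_def by (auto simp: min_def sin_pi_minus)
  show "0 \<le> mu a b" "mu a b \<le> pi/2" using assms unfolding mu_def min_def by (auto simp: field_simps)
qed

lemma cos_diff_upper:
  assumes "0 \<le> a" "a \<le> b" "b \<le> pi"
  shows "cos a - cos b \<le> (b - a) * mu a b"
proof -
  have e: "cos a - cos b = 2 * sin (mu a b) * sin ((b-a)/2)"
    using cos_diff_cos[of a b] sin_mu[OF assms] by simp
  have s1: "sin (mu a b) \<le> mu a b" "0 \<le> sin (mu a b)"
    using sin_mu[OF assms] sin_x_le_x by (auto intro!: sin_ge_zero)
  have s2: "sin ((b-a)/2) \<le> (b-a)/2" "0 \<le> sin ((b-a)/2)"
    using assms sin_x_le_x[of "(b-a)/2"] by (auto intro!: sin_ge_zero)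
  have "2 * sin (mu a b) * sin ((b-a)/2) \<le> 2 * mu a b * ((b-a)/2)"
    using s1 s2 by (intro mult_mono) auto
  thus ?thesis using e by (simp add: algebra_simps)
qed

lemma cos_diff_lower:
  assumes "0 \<le> a" "a \<le> b" "b \<le> pi"
  shows "4 / pi^2 * (b - a) * mu a b \<le> cos a - cos b"
proof -
  have e: "cos a - cos b = 2 * sin (mu a b) * sin ((b-a)/2)"
    using cos_diff_cos[of a b] sin_mu[OF assms] by simp
  have s1: "2 * mu a b / pi \<le> sin (mu a b)" "0 \<le> mu a b"
    using sin_mu[OF assms] by (auto intro!: jordan)
  have s2: "2 * ((b-a)/2) / pi \<le> sin ((b-a)/2)" "0 \<le> b - a"
    using assms jordan[of "(b-a)/2"] by auto
  have z: "0 \<le> 2 * mu a b / pi" "0 \<le> 2 * ((b-a)/2) / pi" using s1 s2 by auto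
  have "0 \<le> sin (mu a b)" using z(1) s1(1) by linarith
  hence "2 * (2 * mu a b / pi) * (2 * ((b-a)/2) / pi) \<le> 2 * sin (mu a b) * sin ((b-a)/2)"
    using s1 s2 by (intro mult_mono) auto
  moreover have "2 * (2 * mu a b / pi) * (2 * ((b-a)/2) / pi) = 4 / pi^2 * (b - a) * mu a b"
    by (simp add: power2_eq_square field_simps)
  ultimately show ?thesis using e by simp
qed



locale cheb =
  fixes s N n :: nat and x :: "nat \<Rightarrow> real"
  assumes sN: "s + 2 < N" and nN: "n = N - s"
    and nodes: "\<forall>j\<le>n. \<exists>k\<le>N. x j = cos (real k * pi / real N)"
    and dec: "\<forall>j<n. x (Suc j) < x j"
begin

definition p :: "nat \<Rightarrow> nat" where
  "p j = (SOME k. k \<le> N \<and> x j = cos (real k * pi / real N))"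
definition th :: "nat \<Rightarrow> real" where "th j = real (p j) * pi / real N"
definition u :: real where "u = pi / real N"

lemma Npos: "0 < real N" using sN by simp
lemma upos: "0 < u" unfolding u_def using Npos by simp
lemma n3: "3 \<le> n" using sN nN by simp
lemma Nn: "N = n + s" using sN nN by simp

lemma p_prop: assumes "j \<le> n" shows "p j \<le> N" "x j = cos (th j)"
proof -
  have "\<exists>k. k \<le> N \<and> x j = cos (real k * pi / real N)" using nodes assms by blast
  hence "p j \<le> N \<and> x j = cos (real (p j) * pi / real N)"
    unfolding p_def by (rule someI_ex)
  thus "p j \<le> N" "x j = cos (th j)" unfolding th_def by auto
qed

lemma th_eq: "th j = real (p j) * u" unfolding th_def u_def by simp

lemma th_range: assumes "j \<le> n" shows "0 \<le> th j" "th j \<le> pi"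
proof -
  show "0 \<le> th j" unfolding th_def by simp
  have "real (p j) \<le> real N" using p_prop[OF assms] by simp
  hence "real (p j) * pi \<le> real N * pi" by simp
  thus "th j \<le> pi" unfolding th_def using Npos by (simp add: divide_le_eq)
qed

lemma arccos_x: assumes "j \<le> n" shows "arccos (x j) = th j"
  using p_prop[OF assms] th_range[OF assms] by (simp add: arccos_cos)

lemma p_step: assumes "j < n" shows "p j < p (Suc j)"
proof -
  have "cos (th (Suc j)) < cos (th j)" using dec assms p_prop[of j] p_prop[of "Suc j"] by auto
  hence "th j < th (Suc j)"
    using cos_mono_less_eq[of "th j" "th (Suc j)"] th_range[of j] th_range[of "Suc j"] assms
    by (smt (verit) Suc_leI less_imp_le_nat cos_mono_le_eq)
  thus ?thesis unfolding th_def using Npos by (simp add: divide_less_cancel)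
qed

lemma p_gap: assumes "i \<le> j" "j \<le> n" shows "p i + (j - i) \<le> p j"
  using assms
proof (induction j)
  case 0 then show ?case by simp
next
  case (Suc j)
  show ?case
  proof (cases "i = Suc j")
    case True then show ?thesis by simp
  next
    case False
    hence "i \<le> j" using Suc by simp
    with Suc have "p i + (j - i) \<le> p j" by simp
    moreover have "p j < p (Suc j)" using p_step Suc by simp
    ultimately show ?thesis using \<open>i \<le> j\<close> by simp
  qed
qed

lemma p_ge: assumes "j \<le> n" shows "j \<le> p j"
  using p_gap[of 0 j] assms by simp

lemma p_le: assumes "j \<le> n" shows "p j \<le> j + s"
  using p_gap[of j n] assms p_prop[of n] Nn by simp

lemma p_step_le: assumes "j < n" shows "p (Suc j) \<le> p j + s + 1"
  using p_le[of "Suc j"] p_ge[of j] assms by simp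

lemma p_lt_N: assumes "j < n" shows "p j + 1 \<le> N"
  using p_step[OF assms] p_prop[of "Suc j"] assms by simp

lemma th_diff_ge: assumes "i \<le> j" "j \<le> n" shows "real (j - i) * u \<le> th j - th i"
proof -
  have "real (j - i) \<le> real (p j) - real (p i)" using p_gap[OF assms] by simp
  hence "real (j - i) * u \<le> (real (p j) - real (p i)) * u" using upos by (simp add: mult_right_mono)
  thus ?thesis by (simp add: th_eq algebra_simps)
qed

lemma th_step_le: assumes "j < n" shows "th (Suc j) - th j \<le> (real s + 1) * u"
proof -
  have "real (p (Suc j)) - real (p j) \<le> real s + 1" using p_step_le[OF assms] by simp
  hence "(real (p (Suc j)) - real (p j)) * u \<le> (real s + 1) * u" using upos by (simp add: mult_right_mono)
  thus ?thesis by (simp add: th_eq algebra_simps)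
qed

lemma th_mono: assumes "i \<le> j" "j \<le> n" shows "th i \<le> th j"
  using th_diff_ge[OF assms] upos by (smt (verit) mult_nonneg_nonneg of_nat_0_le_iff)

lemma th0_le: "th 0 \<le> real s * u"
  using p_le[of 0] upos by (simp add: th_eq mult_right_mono)

lemma x_dec: assumes "i < j" "j \<le> n" shows "x j < x i"
  using assms
proof (induction j)
  case 0 then show ?case by simp
next
  case (Suc j)
  have "x (Suc j) < x j" using dec Suc by simp
  then show ?case using Suc by (cases "i = j") auto
qed

end


lemma min_le_mult: fixes K :: real
  assumes "0 \<le> K" "A \<le> K*A'" "B \<le> K*B'" shows "min A B \<le> K * min A' B'"
proof -
  show ?thesis
  proof (cases "A' \<le> B'")
    case True
    thus ?thesis using assms by simp
  next
    case False
    thus ?thesis using assms by simp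
  qed
qed

lemma mu_nonneg: "0 \<le> a \<Longrightarrow> a \<le> pi \<Longrightarrow> 0 \<le> b \<Longrightarrow> b \<le> pi \<Longrightarrow> 0 \<le> mu a b"
  unfolding mu_def by auto

lemma mu_ratio1: assumes "0 \<le> a" "a \<le> b" "b \<le> c" "c \<le> pi"
  shows "mu b c \<le> 2 * mu a c"
  using assms unfolding mu_def by (intro min_le_mult) (simp_all add: field_simps)

lemma mu_ratio2: assumes "0 \<le> a" "a \<le> b" "b \<le> c" "c \<le> pi"
  shows "mu a b \<le> 2 * mu a c"
  using assms unfolding mu_def by (intro min_le_mult) (simp_all add: field_simps)

context cheb begin

definition CC :: real where "CC = pi^2 * (real s + 1) / 2"
definition RR :: real where "RR = (real s + 1) * (real s + 3) * pi^2 / 4"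

lemma cond1: assumes "j \<le> k" "k < n"
  shows "(x k - x (Suc k)) * (real k + 1 - real j) \<le> CC * (x j - x (Suc k))"
proof -
  define a b c where "a = th j" "b = th k" "c = th (Suc k)"
  have r: "0 \<le> a" "a \<le> b" "b \<le> c" "c \<le> pi"
    using th_range th_mono assms unfolding a_b_c_def by auto
  define M where "M = mu a c"
  have M0: "0 \<le> M" unfolding M_def using r by (intro mu_nonneg) auto
  have A1: "x k - x (Suc k) \<le> (c - b) * mu b c"
    using cos_diff_upper[of b c] r p_prop[of k] p_prop[of "Suc k"] assms unfolding a_b_c_def by auto
  have A2: "c - b \<le> (real s + 1) * u" using th_step_le[of k] assms unfolding a_b_c_def by auto
  have A3: "mu b c \<le> 2 * M" using mu_ratio1[OF r] M_def by simp
  have A4: "4 / pi^2 * (c - a) * M \<le> x j - x (Suc k)"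
    using cos_diff_lower[of a c] r p_prop[of j] p_prop[of "Suc k"] assms unfolding a_b_c_def M_def by auto
  have A5: "(real k + 1 - real j) * u \<le> c - a"
    using th_diff_ge[of j "Suc k"] assms unfolding a_b_c_def by (simp add: of_nat_diff algebra_simps)
  have k1: "0 \<le> real k + 1 - real j" using assms by simp
  have mb: "0 \<le> mu b c" using r by (intro mu_nonneg) auto
  have "(x k - x (Suc k)) * (real k + 1 - real j) \<le> ((c - b) * mu b c) * (real k + 1 - real j)"
    using A1 k1 by (rule mult_right_mono)
  also have "\<dots> \<le> (((real s + 1) * u) * (2 * M)) * (real k + 1 - real j)"
    using A2 A3 k1 mb r upos by (intro mult_right_mono mult_mono) auto
  also have "\<dots> = 2 * (real s + 1) * (((real k + 1 - real j) * u) * M)" by (simp add: algebra_simps)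
  also have "\<dots> \<le> 2 * (real s + 1) * ((c - a) * M)"
    using A5 M0 by (intro mult_left_mono mult_right_mono) auto
  also have "\<dots> = 2 * (real s + 1) * (pi^2/4) * (4 / pi^2 * (c - a) * M)" by (simp add: field_simps)
  also have "\<dots> \<le> 2 * (real s + 1) * (pi^2/4) * (x j - x (Suc k))"
    using A4 by (intro mult_left_mono) auto
  also have "\<dots> = CC * (x j - x (Suc k))" unfolding CC_def by (simp add: field_simps)
  finally show ?thesis .
qed

lemma cond2: assumes "Suc k \<le> j" "j \<le> n"
  shows "(x k - x (Suc k)) * (real j - real k) \<le> CC * (x k - x j)"
proof -
  define a b c where "a = th k" "b = th (Suc k)" "c = th j"
  have r: "0 \<le> a" "a \<le> b" "b \<le> c" "c \<le> pi"
    using th_range th_mono assms unfolding a_b_c_def by auto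
  define M where "M = mu a c"
  have M0: "0 \<le> M" unfolding M_def using r by (intro mu_nonneg) auto
  have A1: "x k - x (Suc k) \<le> (b - a) * mu a b"
    using cos_diff_upper[of a b] r p_prop[of k] p_prop[of "Suc k"] assms unfolding a_b_c_def by auto
  have A2: "b - a \<le> (real s + 1) * u" using th_step_le[of k] assms unfolding a_b_c_def by auto
  have A3: "mu a b \<le> 2 * M" using mu_ratio2[OF r] M_def by simp
  have A4: "4 / pi^2 * (c - a) * M \<le> x k - x j"
    using cos_diff_lower[of a c] r p_prop[of j] p_prop[of k] assms unfolding a_b_c_def M_def by auto
  have A5: "(real j - real k) * u \<le> c - a"
    using th_diff_ge[of k j] assms unfolding a_b_c_def by (simp add: of_nat_diff)
  have k1: "0 \<le> real j - real k" using assms by simp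
  have mb: "0 \<le> mu a b" using r by (intro mu_nonneg) auto
  have "(x k - x (Suc k)) * (real j - real k) \<le> ((b - a) * mu a b) * (real j - real k)"
    using A1 k1 by (rule mult_right_mono)
  also have "\<dots> \<le> (((real s + 1) * u) * (2 * M)) * (real j - real k)"
    using A2 A3 k1 mb r upos by (intro mult_right_mono mult_mono) auto
  also have "\<dots> = 2 * (real s + 1) * (((real j - real k) * u) * M)" by (simp add: algebra_simps)
  also have "\<dots> \<le> 2 * (real s + 1) * ((c - a) * M)"
    using A5 M0 by (intro mult_left_mono mult_right_mono) auto
  also have "\<dots> = 2 * (real s + 1) * (pi^2/4) * (4 / pi^2 * (c - a) * M)" by (simp add: field_simps)
  also have "\<dots> \<le> 2 * (real s + 1) * (pi^2/4) * (x k - x j)"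
    using A4 by (intro mult_left_mono) auto
  also have "\<dots> = CC * (x k - x j)" unfolding CC_def by (simp add: field_simps)
  finally show ?thesis .
qed

end


lemma gap_ratio:
  fixes a b c u S :: real
  assumes r: "0 \<le> a" "a \<le> b" "b \<le> c" "c \<le> pi" and u: "0 < u" and S: "0 \<le> S"
    and g: "u \<le> b - a" "u \<le> c - b" "b - a \<le> (S+1)*u" "c - b \<le> (S+1)*u"
    and e: "u \<le> b" "u \<le> pi - b"
  shows "cos b - cos c \<le> (S+1)*(S+3)*pi^2/4 * (cos a - cos b)"
    and "cos a - cos b \<le> (S+1)*(S+3)*pi^2/4 * (cos b - cos c)"
proof -
  have m1: "(S+1)*u \<le> (S+1)*b" "(S+1)*u \<le> (S+1)*(pi - b)" using e S by (auto intro: mult_left_mono)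
  have m2: "0 \<le> S*a" "0 \<le> S*b" "S*a \<le> S*pi" "S*b \<le> S*pi" "S*c \<le> S*pi" "0 \<le> S*c"
    using r S by (auto intro: mult_left_mono)
  have mu1: "mu b c \<le> (S+3) * mu a b"
  proof -
    have "c \<le> b + (S+1)*b" using g m1 by linarith
    moreover have "(S+1)*b + 2*b = (S+3)*b" by (simp add: algebra_simps)
    moreover have "(S+3)*b \<le> (S+3)*(a+b)" using r S by (intro mult_left_mono) auto
    ultimately have "b + c \<le> (S+3)*(a+b)" by linarith
    hence "(b+c)/2 \<le> ((S+3)*(a+b))/2" by (rule divide_right_mono) simp
    also have "\<dots> = (S+3)*((a+b)/2)" by simp
    finally have 1: "(b+c)/2 \<le> (S+3)*((a+b)/2)" .
    define Y where "Y = pi - (a+b)/2"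
    have "1 * Y \<le> (S+3)*Y" using r S unfolding Y_def by (intro mult_right_mono) auto
    moreover have "pi - (b+c)/2 \<le> Y" using r unfolding Y_def by (simp add: field_simps)
    ultimately have 2: "pi - (b+c)/2 \<le> (S+3)*(pi - (a+b)/2)" unfolding Y_def[symmetric] by linarith
    show ?thesis unfolding mu_def using S 1 2 by (intro min_le_mult) auto
  qed
  have mu2: "mu a b \<le> (S+3) * mu b c"
  proof -
    define Y where "Y = (b+c)/2"
    have "1 * Y \<le> (S+3)*Y" using r S unfolding Y_def by (intro mult_right_mono) auto
    moreover have "(a+b)/2 \<le> Y" using r unfolding Y_def by (simp add: field_simps)
    ultimately have 1: "(a+b)/2 \<le> (S+3)*((b+c)/2)" unfolding Y_def[symmetric] by linarith
    have "b - a \<le> (S+1)*(pi - b)" using g m1 by linarith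
    moreover have "(pi - b) + (S+1)*(pi-b)/2 = (S+3)*((pi-b)/2)" by (simp add: field_simps)
    moreover have "(S+3)*((pi-b)/2) \<le> (S+3)*(pi-(b+c)/2)" using r S by (intro mult_left_mono) (simp_all add: field_simps)
    ultimately have "pi - (a+b)/2 \<le> (S+3)*(pi - (b+c)/2)"
      by (simp add: field_simps)
    hence 2: "pi - (a+b)/2 \<le> (S+3)*(pi - (b+c)/2)" .
    show ?thesis unfolding mu_def using S 1 2 by (intro min_le_mult) auto
  qed
  have n1: "0 \<le> mu a b" "0 \<le> mu b c" using r by (auto intro: mu_nonneg)
  have pp: "0 < pi^2" by simp
  show "cos b - cos c \<le> (S+1)*(S+3)*pi^2/4 * (cos a - cos b)"
  proof -
    have "cos b - cos c \<le> (c - b) * mu b c" using r by (intro cos_diff_upper) auto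
    also have "\<dots> \<le> ((S+1)*u) * ((S+3) * mu a b)" using g mu1 n1 u S by (intro mult_mono) auto
    also have "\<dots> = (S+1)*(S+3)*pi^2/4 * (4/pi^2 * u * mu a b)" by (simp add: field_simps)
    also have "\<dots> \<le> (S+1)*(S+3)*pi^2/4 * (4/pi^2 * (b - a) * mu a b)"
      using g n1 S by (intro mult_left_mono mult_right_mono) auto
    also have "\<dots> \<le> (S+1)*(S+3)*pi^2/4 * (cos a - cos b)"
      using r S by (intro mult_left_mono cos_diff_lower) auto
    finally show ?thesis .
  qed
  show "cos a - cos b \<le> (S+1)*(S+3)*pi^2/4 * (cos b - cos c)"
  proof -
    have "cos a - cos b \<le> (b - a) * mu a b" using r by (intro cos_diff_upper) auto
    also have "\<dots> \<le> ((S+1)*u) * ((S+3) * mu b c)" using g mu2 n1 u S by (intro mult_mono) auto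
    also have "\<dots> = (S+1)*(S+3)*pi^2/4 * (4/pi^2 * u * mu b c)" by (simp add: field_simps)
    also have "\<dots> \<le> (S+1)*(S+3)*pi^2/4 * (4/pi^2 * (c - b) * mu b c)"
      using g n1 S by (intro mult_left_mono mult_right_mono) auto
    also have "\<dots> \<le> (S+1)*(S+3)*pi^2/4 * (cos b - cos c)"
      using r S by (intro mult_left_mono cos_diff_lower) auto
    finally show ?thesis .
  qed
qed

context cheb begin

lemma cond3: assumes "Suc k < n"
  shows "x (Suc k) - x (Suc (Suc k)) \<le> RR * (x k - x (Suc k))"
    and "x k - x (Suc k) \<le> RR * (x (Suc k) - x (Suc (Suc k)))"
proof -
  define a b c where "a = th k" "b = th (Suc k)" "c = th (Suc (Suc k))"
  have r: "0 \<le> a" "a \<le> b" "b \<le> c" "c \<le> pi"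
    using th_range th_mono assms unfolding a_b_c_def by auto
  have g: "u \<le> b - a" "u \<le> c - b" "b - a \<le> (real s+1)*u" "c - b \<le> (real s+1)*u"
    using th_diff_ge[of k "Suc k"] th_diff_ge[of "Suc k" "Suc (Suc k)"] th_step_le[of k] th_step_le[of "Suc k"]
      assms unfolding a_b_c_def by auto
  have e1: "u \<le> b" using p_ge[of "Suc k"] assms upos unfolding a_b_c_def th_eq
    by (simp add: mult_right_mono)
  have "real (p (Suc k)) + 1 \<le> real N" using p_lt_N[of "Suc k"] assms by simp
  hence "(real (p (Suc k)) + 1) * u \<le> real N * u" using upos by (intro mult_right_mono) auto
  hence e2: "u \<le> pi - b" unfolding a_b_c_def th_eq using Npos by (simp add: u_def algebra_simps)
  have xs: "x k = cos a" "x (Suc k) = cos b" "x (Suc (Suc k)) = cos c"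
    using p_prop assms unfolding a_b_c_def by auto
  show "x (Suc k) - x (Suc (Suc k)) \<le> RR * (x k - x (Suc k))"
    "x k - x (Suc k) \<le> RR * (x (Suc k) - x (Suc (Suc k)))"
    using gap_ratio[OF r upos _ g e1 e2] unfolding xs RR_def by auto
qed

end


lemma alt_sum:
  fixes f :: "nat \<Rightarrow> real"
  assumes "\<forall>i\<le>m. 0 \<le> f i" "\<forall>i<m. f (Suc i) \<le> f i"
  shows "0 \<le> (\<Sum>i=0..m. (-1)^i * f i) \<and> (\<Sum>i=0..m. (-1)^i * f i) \<le> f 0 \<and>
         (0 < m \<longrightarrow> f 0 - f 1 \<le> (\<Sum>i=0..m. (-1)^i * f i))"
  using assms
proof (induction m arbitrary: f)
  case 0 then show ?case by simp
next
  case (Suc m)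
  define g where "g = (\<lambda>i. f (Suc i))"
  have "\<forall>i\<le>m. 0 \<le> g i" "\<forall>i<m. g (Suc i) \<le> g i" using Suc.prems unfolding g_def by auto
  note IH = Suc.IH[OF this]
  have e: "(\<Sum>i=0..Suc m. (-1)^i * f i) = f 0 - (\<Sum>i=0..m. (-1)^i * g i)"
    by (subst sum.atLeast0_atMost_Suc_shift) (simp add: g_def sum_negf)
  have "f 1 \<le> f 0" "0 \<le> f 1" using Suc.prems by auto
  moreover have "g 0 = f 1" by (simp add: g_def)
  ultimately show ?case using IH unfolding e by auto
qed

lemma mult_min_le: fixes r :: real
  assumes "0 \<le> r" "r*A \<le> A'" "r*B \<le> B'" shows "r * min A B \<le> min A' B'"
proof (cases "A \<le> B")
  case True
  hence "r*A \<le> r*B" using assms(1) by (intro mult_left_mono) auto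
  thus ?thesis using True assms by simp
next
  case False
  hence "r*B \<le> r*A" using assms(1) by (intro mult_left_mono) auto
  thus ?thesis using False assms by simp
qed

lemma near_aux: fixes d a R :: real
  assumes "0 < d" "0 < a" "d \<le> R*a" "0 \<le> R"
  shows "1/((R+1)*d) \<le> 1/d - 1/(d+a)"
proof -
  have "1/d - 1/(d+a) = a/(d*(d+a))" using assms by (simp add: field_simps)
  moreover have "1/((R+1)*d) \<le> a/(d*(d+a))"
  proof -
    have "d + a \<le> (R+1)*a" using assms by (simp add: algebra_simps)
    hence "d * (d+a) \<le> d * ((R+1)*a)" using assms by (intro mult_left_mono) auto
    have p: "0 < (R+1)*d*(d+a)" using assms by auto
    have "d + a > 0" using assms by simp
    moreover have "0 < (R+1)*d" using assms by simp
    ultimately have "1/((R+1)*d) = (1*(d+a))/(((R+1)*d)*(d+a))"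
      by (subst nonzero_mult_divide_mult_cancel_right) auto
    hence "1/((R+1)*d) = (d+a)/((R+1)*d*(d+a))" by simp
    also have "\<dots> \<le> ((R+1)*a)/((R+1)*d*(d+a))" using \<open>d + a \<le> (R+1)*a\<close> p
      by (intro divide_right_mono) auto
    also have "\<dots> = ((R+1)*a)/((R+1)*(d*(d+a)))" by (simp add: mult.assoc)
    also have "\<dots> = a/(d*(d+a))" using assms by (subst nonzero_mult_divide_mult_cancel_left) auto
    finally show ?thesis .
  qed
  ultimately show ?thesis by simp
qed

lemma right_far:
  assumes "0 \<le> f" "f < q" "q < j" "j \<le> pi"
  shows "(cos f - cos q) * (j - q) \<le> pi^2/2 * (q - f) * (cos f - cos j)"
proof -
  define M where "M = mu f j"
  have M0: "0 \<le> M" unfolding M_def using assms by (intro mu_nonneg) auto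
  have A1: "cos f - cos q \<le> (q - f) * mu f q" using assms by (intro cos_diff_upper) auto
  have A2: "mu f q \<le> 2 * M" unfolding M_def using assms by (intro mu_ratio2) auto
  have A3: "4/pi^2 * (j - f) * M \<le> cos f - cos j" unfolding M_def using assms by (intro cos_diff_lower) auto
  have m0: "0 \<le> mu f q" using assms by (intro mu_nonneg) auto
  have "(cos f - cos q) * (j - q) \<le> ((q - f) * (2*M)) * (j - q)"
    using A1 A2 m0 assms by (intro mult_right_mono order.trans[OF A1] mult_left_mono) auto
  also have "\<dots> = 2 * (q - f) * ((j - q) * M)" by (simp add: algebra_simps)
  also have "\<dots> \<le> 2 * (q - f) * ((j - f) * M)" using assms M0 by (intro mult_left_mono mult_right_mono) auto
  also have "\<dots> = pi^2/2 * (q - f) * (4/pi^2 * (j - f) * M)" by (simp add: field_simps)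
  also have "\<dots> \<le> pi^2/2 * (q - f) * (cos f - cos j)" using A3 assms by (intro mult_left_mono) auto
  finally show ?thesis .
qed

lemma left_far:
  assumes "0 \<le> a" "a < b" "b < f" "f < q" "q \<le> pi" "q - f \<le> f - b"
  shows "(cos f - cos q) * (b - a) \<le> 3*pi^2/4 * (q - f) * (cos a - cos f)"
proof -
  define M where "M = mu a f"
  have M0: "0 \<le> M" unfolding M_def using assms by (intro mu_nonneg) auto
  have A1: "cos f - cos q \<le> (q - f) * mu f q" using assms by (intro cos_diff_upper) auto
  have A2: "mu f q \<le> 3 * M"
  proof -
    have "(f+q)/2 \<le> 3*((a+f)/2)" using assms by (simp add: field_simps)
    moreover have "pi - (f+q)/2 \<le> 3*(pi - (a+f)/2)" using assms by (simp add: field_simps)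
    ultimately show ?thesis unfolding M_def mu_def by (intro min_le_mult) auto
  qed
  have A3: "4/pi^2 * (f - a) * M \<le> cos a - cos f" unfolding M_def using assms by (intro cos_diff_lower) auto
  have m0: "0 \<le> mu f q" using assms by (intro mu_nonneg) auto
  have "(cos f - cos q) * (b - a) \<le> ((q - f) * (3*M)) * (b - a)"
    using A1 A2 m0 assms by (intro mult_right_mono order.trans[OF A1] mult_left_mono) auto
  also have "\<dots> = 3 * (q - f) * ((b - a) * M)" by (simp add: algebra_simps)
  also have "\<dots> \<le> 3 * (q - f) * ((f - a) * M)" using assms M0 by (intro mult_left_mono mult_right_mono) auto
  also have "\<dots> = 3*pi^2/4 * (q - f) * (4/pi^2 * (f - a) * M)" by (simp add: field_simps)
  also have "\<dots> \<le> 3*pi^2/4 * (q - f) * (cos a - cos f)" using A3 assms by (intro mult_left_mono) auto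
  finally show ?thesis .
qed

lemma SR_lower:
  assumes "0 \<le> f" "f < q" "q < q'" "q' \<le> pi" "q - f \<le> d0" "g0 \<le> q' - q" "0 < g0"
  shows "4/pi^2 * (g0/(d0+g0))^2 / (cos f - cos q) \<le> 1/(cos f - cos q) - 1/(cos f - cos q')"
proof -
  define A B where "A = cos f - cos q" "B = cos f - cos q'"
  define g d where "g = q' - q" "d = q - f"
  define r where "r = g/(d+g)"
  define M2 where "M2 = mu f q'"
  have dg: "0 < d" "0 < g" using assms unfolding g_d_def by auto
  have A0: "0 < A" unfolding A_B_def using assms cos_mono_less_eq[of q f] by simp
  have AB: "A < B" unfolding A_B_def using assms cos_mono_less_eq[of q' q] by simp
  have r01: "0 \<le> r" "r \<le> 1" unfolding r_def using dg by auto
  have M20: "0 \<le> M2" unfolding M2_def using assms by (intro mu_nonneg) auto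
  have Bup: "B \<le> (d + g) * M2" unfolding A_B_def M2_def g_d_def
    using cos_diff_upper[of f q'] assms by simp
  have mr: "r * M2 \<le> mu q q'"
    unfolding M2_def mu_def
  proof (rule mult_min_le[OF r01(1)])
    have "r * ((f + q')/2) \<le> 1 * ((f+q')/2)" using r01 assms by (intro mult_right_mono) auto
    thus "r * ((f + q')/2) \<le> (q + q')/2" using assms by (simp add: field_simps)
    define X where "X = pi - (q+q')/2"
    have e1: "g/2 \<le> X" using assms unfolding g_d_def X_def by (simp add: field_simps)
    have e2: "d*(g/2) \<le> d*X" using e1 dg by (intro mult_left_mono) auto
    have "g * (X + d/2) \<le> (d+g) * X" using e2 by (simp add: algebra_simps)
    hence "g * ((pi - (q+q')/2) + d/2) \<le> (d+g) * (pi - (q+q')/2)" unfolding X_def .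
    hence "g * ((pi - (q+q')/2) + d/2) / (d+g) \<le> pi - (q+q')/2"
      using dg by (simp add: pos_divide_le_eq mult.commute)
    moreover have eq: "pi - (f + q')/2 = (pi - (q+q')/2) + d/2" unfolding g_d_def by (simp add: field_simps)
    moreover have "r * (pi - (f + q')/2) = g * ((pi - (q+q')/2) + d/2) / (d+g)" unfolding r_def eq by simp
    ultimately show "r * (pi - (f + q')/2) \<le> pi - (q + q')/2" by linarith
  qed
  have low: "4/pi^2 * g * mu q q' \<le> cos q - cos q'"
    using cos_diff_lower[of q q'] assms unfolding g_d_def by simp
  have rg: "r * (d + g) = g" unfolding r_def using dg by simp
  have key: "4/pi^2 * r^2 * B \<le> cos q - cos q'"
  proof -
    have "4/pi^2 * r^2 * B \<le> 4/pi^2 * r^2 * ((d + g) * M2)"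
      using Bup by (intro mult_left_mono) auto
    also have "\<dots> = 4/pi^2 * (r * (r * (d+g))) * M2" by (simp add: power2_eq_square field_simps)
    also have "\<dots> = 4/pi^2 * g * (r * M2)" using rg by (simp add: algebra_simps)
    also have "\<dots> \<le> 4/pi^2 * g * mu q q'" using mr dg by (intro mult_left_mono) auto
    finally show ?thesis using low by linarith
  qed
  have r0: "g0/(d0+g0) \<le> r"
  proof -
    have "0 < d0 + g0" using assms dg unfolding g_d_def by linarith
    have "g0 * (d + g) \<le> g * (d0 + g0)"
    proof -
      have "g0 * d \<le> g * d0" using assms dg unfolding g_d_def
        by (meson less_eq_real_def mult_mono')
      thus ?thesis by (simp add: algebra_simps)
    qed
    thus ?thesis unfolding r_def using dg \<open>0 < d0 + g0\<close> by (simp add: field_simps)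
  qed
  have r02: "(g0/(d0+g0))^2 \<le> r^2"
    using r0 assms dg by (intro power_mono) (auto intro!: divide_nonneg_pos simp: g_d_def)
  have "4/pi^2 * (g0/(d0+g0))^2 * B \<le> 4/pi^2 * r^2 * B"
    using r02 AB A0 by (intro mult_right_mono mult_left_mono) auto
  hence k2: "4/pi^2 * (g0/(d0+g0))^2 * B \<le> B - A" using key unfolding A_B_def by simp
  have "1/A - 1/B = (B - A)/(A*B)" using A0 AB by (simp add: field_simps)
  moreover have "4/pi^2 * (g0/(d0+g0))^2 / A = (4/pi^2 * (g0/(d0+g0))^2 * B)/(A*B)"
    using A0 AB by (simp add: field_simps)
  moreover have "(4/pi^2 * (g0/(d0+g0))^2 * B)/(A*B) \<le> (B - A)/(A*B)"
    using k2 A0 AB by (intro divide_right_mono) auto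
  ultimately show ?thesis unfolding A_B_def by simp
qed



lemma sum_inv_le_harm:
  assumes "finite A" "inj_on g A" "g ` A \<subseteq> {1..n}"
  shows "(\<Sum>j\<in>A. 1 / real (g j)) \<le> harm n"
proof -
  have "(\<Sum>j\<in>A. 1 / real (g j)) = (\<Sum>i\<in>g ` A. 1 / real i)"
    using sum.reindex[OF assms(2), of "\<lambda>i. 1 / real i"] by simp
  also have "\<dots> \<le> (\<Sum>i\<in>{1..n}. 1 / real i)" using assms by (intro sum_mono2) auto
  also have "\<dots> = harm n" unfolding harm_def by (simp add: inverse_eq_divide)
  finally show ?thesis .
qed

lemma harm_le_ln: assumes "1 \<le> n" shows "harm n \<le> 1 + ln (real n)"
proof -
  have "harm (Suc 0) = (1::real)" by (simp add: harm_def)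
  thus ?thesis using euler_mascheroni_sequence_decreasing[of 1 n] assms by simp
qed

context cheb begin

definition dd :: "real \<Rightarrow> nat \<Rightarrow> real" where "dd t j = \<bar>t - x j\<bar>"
definition DD :: "real \<Rightarrow> real" where "DD t = (\<Sum>j=0..n. (-1)^j / (t - x j))"

lemma leb_eq: "berrut_lebesgue_fun x n t = (\<Sum>j=0..n. 1 / dd t j) / \<bar>DD t\<bar>"
proof -
  have "berrut_lebesgue_fun x n t = (\<Sum>j=0..n. (1 / dd t j) / \<bar>DD t\<bar>)"
    unfolding berrut_lebesgue_fun_def berrut_basis_def dd_def DD_def
    by (intro sum.cong) (auto simp: abs_mult power_abs)
  thus ?thesis by (simp add: sum_divide_distrib)
qed

lemma ln_n: "1 \<le> ln (real n)"
proof -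
  have "exp 1 \<le> real n" using exp_le n3 by linarith
  thus ?thesis using n3 by (subst ln_ge_iff) auto
qed

end


lemma ratio_from_mult:
  fixes a b c j u :: real
  assumes "0 < b" "0 < j" "0 < u" "a * (j * u) \<le> c * u * b"
  shows "a / b \<le> c / j"
proof -
  have "(a * j) * u \<le> (c * b) * u" using assms(4) by (simp add: algebra_simps)
  hence "a * j \<le> c * b" using assms(3) by simp
  thus ?thesis using assms by (simp add: field_simps)
qed

context cheb begin

lemma phi_facts: assumes "-1 \<le> t" "t \<le> 1"
  shows "cos (arccos t) = t" "0 \<le> arccos t" "arccos t \<le> pi"
  using assms by (auto intro: arccos_lbound arccos_ubound)

lemma x_ge: "j \<le> n \<Longrightarrow> -1 \<le> x j" using p_prop by simp
lemma x_le: "j \<le> n \<Longrightarrow> x j \<le> 1" using p_prop by simp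

lemma x_le0: "j \<le> n \<Longrightarrow> x j \<le> x 0"
  using x_dec[of 0 j] by (cases j) auto

lemma RR_nonneg: "0 \<le> RR" unfolding RR_def by simp

lemma caseA:
  assumes t1: "t \<le> 1" and tx: "x 0 < t"
  shows "berrut_lebesgue_fun x n t \<le> (RR + 1) * (1 + pi^2 * (real s + 1) * ln (real n))"
proof -
  define f where "f = arccos t"
  have tm: "-1 \<le> t" using x_ge[of 0] tx by simp
  note ph = phi_facts[OF tm t1, folded f_def]
  have fth0: "f < th 0"
    using cos_mono_less_eq[of "th 0" f] ph th_range[of 0] p_prop[of 0] tx by auto
  have xlt: "\<And>j. j \<le> n \<Longrightarrow> x j < t" using x_le0 tx by (meson le_less_trans)
  have ddj: "\<And>j. j \<le> n \<Longrightarrow> dd t j = cos f - cos (th j)"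
    unfolding dd_def using xlt p_prop ph by force
  define g where "g = (\<lambda>j. 1 / (t - x j))"
  have DDg: "DD t = (\<Sum>j=0..n. (-1)^j * g j)" unfolding DD_def g_def by simp
  have "\<forall>i\<le>n. 0 \<le> g i" unfolding g_def using xlt by (simp add: less_imp_le)
  moreover have "\<forall>i<n. g (Suc i) \<le> g i"
  proof (intro allI impI)
    fix i assume "i < n"
    hence "x (Suc i) < x i" "x i < t" using dec xlt by auto
    thus "g (Suc i) \<le> g i" unfolding g_def by (intro divide_left_mono) auto
  qed
  ultimately have alt: "g 0 - g 1 \<le> DD t" using alt_sum[of n g] n3 unfolding DDg by auto
  define cA where "cA = 4/pi^2 * (u/(real s * u + u))^2"
  have cA_eq: "cA = 4 / (pi^2 * (real s + 1)^2)"
  proof -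
    have "real s * u + u = (real s + 1) * u" by (simp add: algebra_simps)
    hence "u/(real s * u + u) = 1/(real s + 1)" using upos by simp
    thus ?thesis unfolding cA_def by (simp add: power_divide)
  qed
  have cApos: "0 < cA" unfolding cA_eq by simp
  have th01: "th 0 < th 1" using p_step[of 0] n3 unfolding th_eq using upos by simp
  have "cA / (cos f - cos (th 0)) \<le> 1/(cos f - cos (th 0)) - 1/(cos f - cos (th 1))"
    unfolding cA_def
  proof (rule SR_lower)
    show "0 \<le> f" "f < th 0" "th 0 < th 1" "th 1 \<le> pi" "0 < u" using ph fth0 th01 th_range[of 1] n3 upos by auto
    show "th 0 - f \<le> real s * u" using th0_le ph by linarith
    show "u \<le> th 1 - th 0" using th_diff_ge[of 0 1] n3 by simp
  qed
  hence "cA / dd t 0 \<le> 1/dd t 0 - 1/dd t 1" using ddj[of 0] ddj[of 1] n3 by simp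
  moreover have "g 0 = 1/dd t 0" "g 1 = 1/dd t 1" unfolding g_def dd_def using xlt[of 0] xlt[of 1] n3 by auto
  ultimately have DDlow: "cA / dd t 0 \<le> DD t" using alt by linarith
  have dd0: "0 < dd t 0" using xlt[of 0] unfolding dd_def by simp
  have ddpos: "\<And>j. j \<le> n \<Longrightarrow> 0 < dd t j" using xlt unfolding dd_def by force
  have "0 < cA / dd t 0" using cApos dd0 by simp
  hence DDpos: "0 < DD t" using DDlow by linarith
  have "berrut_lebesgue_fun x n t = (\<Sum>j=0..n. 1 / dd t j) / DD t"
    using leb_eq DDpos by simp
  also have "\<dots> \<le> (\<Sum>j=0..n. 1 / dd t j) / (cA / dd t 0)"
  proof (rule divide_left_mono[OF DDlow])
    show "0 \<le> (\<Sum>j=0..n. 1 / dd t j)" by (intro sum_nonneg) (simp add: dd_def)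
    show "0 < DD t * (cA / dd t 0)" using DDpos cApos dd0 by simp
  qed
  also have "\<dots> = (1/cA) * (\<Sum>j=0..n. dd t 0 / dd t j)"
  proof -
    have "\<And>a::real. a / (cA / dd t 0) = (1/cA) * (dd t 0 * a)" using cApos dd0 by simp
    moreover have "dd t 0 * (\<Sum>j=0..n. 1 / dd t j) = (\<Sum>j=0..n. dd t 0 / dd t j)"
      by (simp add: sum_distrib_left)
    ultimately show ?thesis by metis
  qed
  finally have L0: "berrut_lebesgue_fun x n t \<le> (1/cA) * (\<Sum>j=0..n. dd t 0 / dd t j)" .
  have E0: "(\<Sum>j=0..n. dd t 0 / dd t j) = 1 + (\<Sum>j=1..n. dd t 0 / dd t j)"
    using dd0 by (simp add: sum.atLeast_Suc_atMost)
  have S1: "(\<Sum>j=1..n. dd t 0 / dd t j) \<le> (\<Sum>j=1..n. pi^2/2 * real s / real j)"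
  proof (rule sum_mono)
    fix j assume j: "j \<in> {1..n}"
    have r: "(cos f - cos (th 0)) * (th j - th 0) \<le> pi^2/2 * (th 0 - f) * (cos f - cos (th j))"
    proof (rule right_far)
      show "0 \<le> f" "f < th 0" using ph fth0 by auto
      have "0 < real j * u" using j upos by simp
      thus "th 0 < th j" using th_diff_ge[of 0 j] j by simp
      show "th j \<le> pi" using th_range j by auto
    qed
    have a1: "real j * u \<le> th j - th 0" using th_diff_ge[of 0 j] j by simp
    have a2: "th 0 - f \<le> real s * u" using th0_le ph by linarith
    have "dd t 0 * (real j * u) \<le> dd t 0 * (th j - th 0)" using a1 dd0 by (intro mult_left_mono) auto
    also have "\<dots> \<le> pi^2/2 * (th 0 - f) * dd t j" using r ddj[of 0] ddj[of j] j by simp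
    also have "\<dots> \<le> pi^2/2 * (real s * u) * dd t j"
      using a2 ddpos[of j] j by (intro mult_right_mono mult_left_mono) auto
    finally have "dd t 0 * (real j * u) \<le> pi^2/2 * real s * u * dd t j" by (simp add: algebra_simps)
    thus "dd t 0 / dd t j \<le> pi^2/2 * real s / real j"
      using ddpos[of j] j upos by (intro ratio_from_mult) auto
  qed
  have S2: "(\<Sum>j=1..n. pi^2/2 * real s / real j) = pi^2/2 * real s * harm n"
    unfolding harm_def by (simp add: sum_distrib_left inverse_eq_divide)
  have "(\<Sum>j=0..n. dd t 0 / dd t j) \<le> 1 + pi^2/2 * real s * harm n" using E0 S1 S2 by linarith
  hence "(1/cA) * (\<Sum>j=0..n. dd t 0 / dd t j) \<le> (1/cA) * (1 + pi^2/2 * real s * harm n)"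
    using cApos by (intro mult_left_mono) auto
  hence L1: "berrut_lebesgue_fun x n t \<le> (1/cA) * (1 + pi^2/2 * real s * harm n)"
    using L0 by linarith

  have H: "harm n \<le> 1 + ln (real n)" using harm_le_ln n3 by simp
  have l1: "1 \<le> ln (real n)" by (rule ln_n)
  have "1 + pi^2/2 * real s * harm n \<le> 1 + pi^2/2 * real s * (1 + ln (real n))"
    using H by (intro add_left_mono mult_left_mono) auto
  also have "\<dots> \<le> 1 + pi^2 * (real s + 1) * ln (real n)"
  proof -
    have "real s * (1 + ln (real n)) \<le> 2 * (real s + 1) * ln (real n)"
    proof -
      have "real s * 1 \<le> real s * ln (real n)" using l1 by (intro mult_left_mono) auto
      moreover have "0 \<le> 2 * ln (real n)" using l1 by simp
      ultimately show ?thesis by (simp add: algebra_simps)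
    qed
    hence "pi^2/2 * (real s * (1 + ln (real n))) \<le> pi^2/2 * (2 * (real s + 1) * ln (real n))"
      by (intro mult_left_mono) auto
    thus ?thesis by (simp add: algebra_simps)
  qed
  finally have b2: "1 + pi^2/2 * real s * harm n \<le> 1 + pi^2 * (real s + 1) * ln (real n)" .
  have b1: "1/cA \<le> RR + 1"
  proof -
    have "1/cA = pi^2 * (real s + 1)^2 / 4" unfolding cA_eq by simp
    also have "\<dots> \<le> (real s + 1) * (real s + 3) * pi^2 / 4"
      by (simp add: power2_eq_square mult_left_mono divide_right_mono)
    finally show ?thesis unfolding RR_def by simp
  qed
  have "0 \<le> 1 + pi^2/2 * real s * harm n" by (simp add: harm_nonneg)
  hence "(1/cA) * (1 + pi^2/2 * real s * harm n) \<le> (RR + 1) * (1 + pi^2 * (real s + 1) * ln (real n))"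
    using b1 b2 cApos RR_nonneg by (intro mult_mono) auto
  with L1 show ?thesis by linarith
qed

end


lemma neg1_pow_diff: "i \<le> k \<Longrightarrow> (-1::real)^(k-i) = (-1)^k * (-1)^i"
proof -
  assume "i \<le> k"
  hence "(-1::real)^k = (-1)^(k-i) * (-1)^i" by (simp add: power_add[symmetric])
  hence "(-1::real)^k * (-1)^i = (-1)^(k-i) * ((-1)^i * (-1)^i)" by (simp add: algebra_simps)
  also have "(-1::real)^i * (-1)^i = 1" by (simp add: power_add[symmetric])
  finally show ?thesis by simp
qed

lemma split4:
  fixes g :: "nat \<Rightarrow> real"
  assumes "k < n"
  shows "sum g {0..n} = sum g {0..<k} + g k + g (Suc k) + sum g {Suc (Suc k)..n}"
proof -
  have eq: "{0..n} = {0..<Suc (Suc k)} \<union> {Suc (Suc k)..n}" using assms by auto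
  have "sum g {0..n} = sum g {0..<Suc (Suc k)} + sum g {Suc (Suc k)..n}"
    unfolding eq by (rule sum.union_disjoint) auto
  thus ?thesis by simp
qed

context cheb begin

lemma caseC:
  assumes k: "k < n" and t1: "x (Suc k) < t" and t2: "t < x k"
    and cnd: "arccos (x (Suc k)) - arccos t \<le> arccos t - arccos (x k)"
  shows "berrut_lebesgue_fun x n t \<le> (RR + 1) * (1 + pi^2 * (real s + 1) * ln (real n))"
proof -
  define f where "f = arccos t"
  have tm: "-1 \<le> t" using x_ge[of "Suc k"] t1 k by simp
  have tp: "t \<le> 1" using x_le[of k] t2 k by simp
  note ph = phi_facts[OF tm tp, folded f_def]
  have fk: "th k < f"
    using cos_mono_less_eq[of f "th k"] ph th_range[of k] p_prop[of k] t2 k by auto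
  have fk1: "f < th (Suc k)"
    using cos_mono_less_eq[of "th (Suc k)" f] ph th_range[of "Suc k"] p_prop[of "Suc k"] t1 k by auto
  have cnd': "th (Suc k) - f \<le> f - th k" using cnd arccos_x[of k] arccos_x[of "Suc k"] k
    unfolding f_def by simp
  have dR: "th (Suc k) - f \<le> (real s + 1) * u / 2" using cnd' th_step_le[of k] k by linarith
  have xgt: "\<And>j. j \<le> k \<Longrightarrow> t < x j"
    using t2 x_dec k by (metis le_less less_trans order.strict_trans)
  have xlt: "\<And>j. Suc k \<le> j \<Longrightarrow> j \<le> n \<Longrightarrow> x j < t"
    using t1 x_dec by (metis le_less less_trans)
  have ddL: "\<And>j. j \<le> k \<Longrightarrow> dd t j = cos (th j) - cos f"
    unfolding dd_def using xgt p_prop k ph by (smt (verit) le_less_trans less_imp_le_nat)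
  have ddR: "\<And>j. Suc k \<le> j \<Longrightarrow> j \<le> n \<Longrightarrow> dd t j = cos f - cos (th j)"
    unfolding dd_def using xlt p_prop ph by force
  have ddpos: "\<And>j. j \<le> n \<Longrightarrow> 0 < dd t j"
  proof -
    fix j assume j: "j \<le> n"
    show "0 < dd t j"
    proof (cases "j \<le> k")
      case True thus ?thesis using xgt[of j] unfolding dd_def by simp
    next
      case False thus ?thesis using xlt[of j] j unfolding dd_def by simp
    qed
  qed
  define fL where "fL = (\<lambda>i. 1 / (x (k - i) - t))"
  define fR where "fR = (\<lambda>i. 1 / (t - x (i + Suc k)))"
  define SL where "SL = (\<Sum>i=0..k. (-1)^i * fL i)"
  define SR where "SR = (\<Sum>i=0..n - Suc k. (-1)^i * fR i)"
  have sp: "DD t = (\<Sum>j=0..k. (-1)^j/(t - x j)) + (\<Sum>j=Suc k..n. (-1)^j/(t - x j))"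
    unfolding DD_def using sum.ub_add_nat[of 0 k "\<lambda>j. (-1)^j/(t - x j)" "n - k"] k by simp
  have lft: "(\<Sum>j=0..k. (-1)^j/(t - x j)) = - ((-1)^k * SL)"
  proof -
    have "(\<Sum>j=0..k. (-1)^j/(t - x j)) = (\<Sum>i=0..k. (-1)^(k-i)/(t - x (k-i)))"
      using sum.atLeastAtMost_rev[of "\<lambda>j. (-1)^j/(t - x j)" 0 k] by simp
    also have "\<dots> = (\<Sum>i=0..k. - ((-1)^k * ((-1)^i * fL i)))"
    proof (rule sum.cong)
      fix i assume "i \<in> {0..k}"
      hence "(-1::real)^(k-i) = (-1)^k * (-1)^i" by (intro neg1_pow_diff) auto
      thus "(-1)^(k-i)/(t - x (k-i)) = - ((-1)^k * ((-1)^i * fL i))"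
        unfolding fL_def by (simp add: divide_simps) (simp add: algebra_simps)
    qed simp
    finally show ?thesis unfolding SL_def by (simp add: sum_negf sum_distrib_left)
  qed
  have rgt: "(\<Sum>j=Suc k..n. (-1)^j/(t - x j)) = - ((-1)^k * SR)"
  proof -
    have "(\<Sum>j=Suc k..n. (-1)^j/(t - x j)) = (\<Sum>i=0..n - Suc k. (-1)^(i + Suc k)/(t - x (i + Suc k)))"
      using sum.shift_bounds_cl_nat_ivl[of "\<lambda>j. (-1)^j/(t - x j)" 0 "Suc k" "n - Suc k"] k by simp
    also have "\<dots> = (\<Sum>i=0..n - Suc k. - ((-1)^k * ((-1)^i * fR i)))"
      unfolding fR_def by (intro sum.cong) (simp_all add: power_add algebra_simps)
    finally show ?thesis unfolding SR_def by (simp add: sum_negf sum_distrib_left)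
  qed
  have fL0: "\<forall>i\<le>k. 0 \<le> fL i" unfolding fL_def using xgt by (simp add: less_imp_le)
  have fL1: "\<forall>i<k. fL (Suc i) \<le> fL i"
  proof (intro allI impI)
    fix i assume i: "i < k"
    have "x (k - i) < x (k - Suc i)" using x_dec[of "k - Suc i" "k - i"] i k by simp
    moreover have "t < x (k - i)" using xgt by simp
    ultimately show "fL (Suc i) \<le> fL i" unfolding fL_def by (intro divide_left_mono) auto
  qed
  have fR0: "\<forall>i\<le>n - Suc k. 0 \<le> fR i"
  proof (intro allI impI)
    fix i assume "i \<le> n - Suc k"
    hence "x (i + Suc k) < t" using xlt[of "i + Suc k"] k by simp
    thus "0 \<le> fR i" unfolding fR_def by simp
  qed
  have fR1: "\<forall>i<n - Suc k. fR (Suc i) \<le> fR i"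
  proof (intro allI impI)
    fix i assume i: "i < n - Suc k"
    have "x (Suc i + Suc k) < x (i + Suc k)" using x_dec[of "i + Suc k" "Suc i + Suc k"] i by simp
    moreover have "x (Suc i + Suc k) < t" using xlt[of "Suc i + Suc k"] i by simp
    moreover have "x (i + Suc k) < t" using xlt[of "i + Suc k"] i by simp
    ultimately show "fR (Suc i) \<le> fR i" unfolding fR_def by (intro divide_left_mono) auto
  qed
  note altL = alt_sum[OF fL0 fL1, folded SL_def]
  note altR = alt_sum[OF fR0 fR1, folded SR_def]
  have "DD t = - ((-1)^k * (SL + SR))" using sp lft rgt by (simp add: algebra_simps)
  hence "\<bar>DD t\<bar> = \<bar>SL + SR\<bar>" by (simp add: abs_mult power_abs)
  hence DDabs: "\<bar>DD t\<bar> = SL + SR" using altL altR by simp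
  have fL00: "fL 0 = 1 / dd t k" unfolding fL_def dd_def using xgt[of k] by simp
  have fR00: "fR 0 = 1 / dd t (Suc k)" unfolding fR_def dd_def using xlt[of "Suc k"] k by simp
  have RR0: "0 \<le> RR" by (rule RR_nonneg)
  have nearL: "1/((RR+1) * dd t k) \<le> SL"
  proof (cases k)
    case 0
    have "1/((RR+1) * dd t k) \<le> 1 / dd t k"
      using ddpos[of k] k RR0 by (intro divide_left_mono) (auto simp: mult_pos_pos)
    thus ?thesis unfolding SL_def using fL00 0 by simp
  next
    case (Suc k')
    have "fL 0 - fL 1 \<le> SL" using altL Suc by simp
    moreover have "fL 1 = 1 / (dd t k + (x k' - x k))" unfolding fL_def dd_def using Suc xgt[of k] by simp
    moreover have "1/((RR+1) * dd t k) \<le> 1 / dd t k - 1 / (dd t k + (x k' - x k))"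
    proof (rule near_aux)
      show "0 < dd t k" using ddpos k by simp
      show "0 < x k' - x k" using x_dec[of k' k] Suc k by simp
      have "dd t k \<le> x k - x (Suc k)" unfolding dd_def using t1 t2 by simp
      also have "\<dots> \<le> RR * (x k' - x k)" using cond3(1)[of k'] Suc k by simp
      finally show "dd t k \<le> RR * (x k' - x k)" .
    qed (rule RR0)
    ultimately show ?thesis using fL00 by linarith
  qed
  have nearR: "1/((RR+1) * dd t (Suc k)) \<le> SR"
  proof (cases "Suc k = n")
    case True
    have "1/((RR+1) * dd t (Suc k)) \<le> 1 / dd t (Suc k)"
      using ddpos[of "Suc k"] k RR0 by (intro divide_left_mono) (auto simp: mult_pos_pos)
    thus ?thesis unfolding SR_def using fR00 True by simp
  next
    case False
    have "fR 0 - fR 1 \<le> SR" using altR False k by simp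
    moreover have "fR 1 = 1 / (dd t (Suc k) + (x (Suc k) - x (Suc (Suc k))))"
      unfolding fR_def dd_def using xlt[of "Suc k"] k by simp
    moreover have "1/((RR+1) * dd t (Suc k)) \<le> 1 / dd t (Suc k) - 1 / (dd t (Suc k) + (x (Suc k) - x (Suc (Suc k))))"
    proof (rule near_aux)
      show "0 < dd t (Suc k)" using ddpos k by simp
      show "0 < x (Suc k) - x (Suc (Suc k))" using x_dec[of "Suc k" "Suc (Suc k)"] False k by simp
      have "dd t (Suc k) \<le> x k - x (Suc k)" unfolding dd_def using t1 t2 by simp
      also have "\<dots> \<le> RR * (x (Suc k) - x (Suc (Suc k)))" using cond3(2)[of k] False k by simp
      finally show "dd t (Suc k) \<le> RR * (x (Suc k) - x (Suc (Suc k)))" .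
    qed (rule RR0)
    ultimately show ?thesis using fR00 by linarith
  qed
  define cC where "cC = 4/pi^2 * (u/((real s + 1) * u / 2 + u))^2"
  have cC_eq: "cC = 16 / (pi^2 * (real s + 3)^2)"
  proof -
    have eq: "(real s + 1) * u / 2 + u = (real s + 3) / 2 * u" by (simp add: field_simps)
    have "u/((real s + 1) * u / 2 + u) = u / ((real s + 3) / 2 * u)" by (simp only: eq)
    also have "\<dots> = 1 / ((real s + 3) / 2)" using upos by simp
    also have "\<dots> = 2 / (real s + 3)" by simp
    finally have "u/((real s + 1) * u / 2 + u) = 2 / (real s + 3)" .
    thus ?thesis unfolding cC_def by (simp add: power_divide)
  qed
  have cCpos: "0 < cC" unfolding cC_eq by simp
  have farSR: "cC / dd t (Suc k) \<le> SR"
  proof (cases "Suc k = n")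
    case True
    have s9: "(3::real)^2 \<le> (real s + 3)^2" by (intro power_mono) auto
    have p9: "(3::real)^2 \<le> pi^2" using pi_gt3 by (intro power_mono) auto
    have "(3::real)^2 * 3^2 \<le> pi^2 * (real s + 3)^2" using s9 p9 by (intro mult_mono) auto
    hence "16 \<le> pi^2 * (real s + 3)^2" by simp
    hence "cC \<le> 1" unfolding cC_eq by simp
    hence "cC / dd t (Suc k) \<le> 1 / dd t (Suc k)" using ddpos[of "Suc k"] k by (intro divide_right_mono) auto
    thus ?thesis unfolding SR_def using fR00 True by simp
  next
    case False
    have "fR 0 - fR 1 \<le> SR" using altR False k by simp
    moreover have "fR 1 = 1 / dd t (Suc (Suc k))" unfolding fR_def dd_def using xlt[of "Suc (Suc k)"] False k by simp
    moreover have "cC / (cos f - cos (th (Suc k))) \<le> 1/(cos f - cos (th (Suc k))) - 1/(cos f - cos (th (Suc (Suc k))))"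
      unfolding cC_def
    proof (rule SR_lower)
      show "0 \<le> f" "f < th (Suc k)" "0 < u" using ph fk1 upos by auto
      show "th (Suc k) < th (Suc (Suc k))" using p_step[of "Suc k"] False k unfolding th_eq using upos by simp
      show "th (Suc (Suc k)) \<le> pi" using th_range False k by simp
      show "th (Suc k) - f \<le> (real s + 1) * u / 2" by (rule dR)
      show "u \<le> th (Suc (Suc k)) - th (Suc k)" using th_diff_ge[of "Suc k" "Suc (Suc k)"] False k by simp
    qed
    ultimately show ?thesis using fR00 ddR[of "Suc k"] ddR[of "Suc (Suc k)"] False k by simp
  qed
  have SLnn: "0 \<le> SL" using altL by simp
  have "0 < cC / dd t (Suc k)" using cCpos ddpos[of "Suc k"] k by simp
  hence DDpos: "0 < \<bar>DD t\<bar>" using farSR SLnn DDabs by linarith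
  define KL where "KL = (1/cC) * (3*pi^2/4 * ((real s + 1)/2))"
  define KR where "KR = (1/cC) * (pi^2/2 * ((real s + 1)/2))"
  have farterm: "\<And>j. j \<le> n \<Longrightarrow> (1 / dd t j) / \<bar>DD t\<bar> \<le> (1/cC) * (dd t (Suc k) / dd t j)"
  proof -
    fix j assume j: "j \<le> n"
    have "cC / dd t (Suc k) \<le> \<bar>DD t\<bar>" using farSR DDabs SLnn by linarith
    hence "(1 / dd t j) / \<bar>DD t\<bar> \<le> (1 / dd t j) / (cC / dd t (Suc k))"
      using ddpos[of j] j ddpos[of "Suc k"] k cCpos DDpos by (intro divide_left_mono) auto
    also have "\<dots> = (1/cC) * (dd t (Suc k) / dd t j)" by simp
    finally show "(1 / dd t j) / \<bar>DD t\<bar> \<le> (1/cC) * (dd t (Suc k) / dd t j)" .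
  qed
  have farL: "\<And>j. j < k \<Longrightarrow> (1 / dd t j) / \<bar>DD t\<bar> \<le> KL / real (k - j)"
  proof -
    fix j assume j: "j < k"
    have r: "(cos f - cos (th (Suc k))) * (th k - th j) \<le> 3*pi^2/4 * (th (Suc k) - f) * (cos (th j) - cos f)"
    proof (rule left_far)
      show "0 \<le> th j" using th_range j k by simp
      have "0 < real (k - j) * u" using j upos by simp
      thus "th j < th k" using th_diff_ge[of j k] j k by simp
      show "th k < f" "f < th (Suc k)" "th (Suc k) - f \<le> f - th k" by fact+
      show "th (Suc k) \<le> pi" using th_range k by simp
    qed
    have a1: "real (k - j) * u \<le> th k - th j" using th_diff_ge[of j k] j k by simp
    have "dd t (Suc k) * (real (k - j) * u) \<le> dd t (Suc k) * (th k - th j)"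
      using a1 ddpos[of "Suc k"] k by (intro mult_left_mono) auto
    also have "\<dots> \<le> 3*pi^2/4 * (th (Suc k) - f) * dd t j" using r ddL[of j] ddR[of "Suc k"] j k by simp
    also have "\<dots> \<le> 3*pi^2/4 * ((real s + 1) * u / 2) * dd t j"
      using dR ddpos[of j] j k by (intro mult_right_mono mult_left_mono) auto
    finally have "dd t (Suc k) * (real (k - j) * u) \<le> 3*pi^2/4 * ((real s + 1)/2) * u * dd t j"
      by (simp add: algebra_simps)
    hence "dd t (Suc k) / dd t j \<le> 3*pi^2/4 * ((real s + 1)/2) / real (k - j)"
      using ddpos[of j] j k upos by (intro ratio_from_mult) auto
    hence "(1/cC) * (dd t (Suc k) / dd t j) \<le> (1/cC) * (3*pi^2/4 * ((real s + 1)/2) / real (k - j))"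
      using cCpos by (intro mult_left_mono) auto
    moreover have "KL / real (k - j) = (1/cC) * (3*pi^2/4 * ((real s + 1)/2) / real (k - j))"
      unfolding KL_def by simp
    ultimately show "(1 / dd t j) / \<bar>DD t\<bar> \<le> KL / real (k - j)"
      using farterm[of j] j k by linarith
  qed
  have farR: "\<And>j. Suc (Suc k) \<le> j \<Longrightarrow> j \<le> n \<Longrightarrow> (1 / dd t j) / \<bar>DD t\<bar> \<le> KR / real (j - Suc k)"
  proof -
    fix j assume j: "Suc (Suc k) \<le> j" "j \<le> n"
    have r: "(cos f - cos (th (Suc k))) * (th j - th (Suc k)) \<le> pi^2/2 * (th (Suc k) - f) * (cos f - cos (th j))"
    proof (rule right_far)
      show "0 \<le> f" "f < th (Suc k)" using ph fk1 by auto
      have "0 < real (j - Suc k) * u" using j upos by simp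
      thus "th (Suc k) < th j" using th_diff_ge[of "Suc k" j] j by simp
      show "th j \<le> pi" using th_range j by simp
    qed
    have a1: "real (j - Suc k) * u \<le> th j - th (Suc k)" using th_diff_ge[of "Suc k" j] j by simp
    have "dd t (Suc k) * (real (j - Suc k) * u) \<le> dd t (Suc k) * (th j - th (Suc k))"
      using a1 ddpos[of "Suc k"] k by (intro mult_left_mono) auto
    also have "\<dots> \<le> pi^2/2 * (th (Suc k) - f) * dd t j" using r ddR[of j] ddR[of "Suc k"] j k by simp
    also have "\<dots> \<le> pi^2/2 * ((real s + 1) * u / 2) * dd t j"
      using dR ddpos[of j] j by (intro mult_right_mono mult_left_mono) auto
    finally have "dd t (Suc k) * (real (j - Suc k) * u) \<le> pi^2/2 * ((real s + 1)/2) * u * dd t j"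
      by (simp add: algebra_simps)
    hence "dd t (Suc k) / dd t j \<le> pi^2/2 * ((real s + 1)/2) / real (j - Suc k)"
      using ddpos[of j] j upos by (intro ratio_from_mult) auto
    hence "(1/cC) * (dd t (Suc k) / dd t j) \<le> (1/cC) * (pi^2/2 * ((real s + 1)/2) / real (j - Suc k))"
      using cCpos by (intro mult_left_mono) auto
    moreover have "KR / real (j - Suc k) = (1/cC) * (pi^2/2 * ((real s + 1)/2) / real (j - Suc k))"
      unfolding KR_def by simp
    ultimately show "(1 / dd t j) / \<bar>DD t\<bar> \<le> KR / real (j - Suc k)"
      using farterm[of j] j by linarith
  qed
  have near: "(1 / dd t k + 1 / dd t (Suc k)) / \<bar>DD t\<bar> \<le> RR + 1"
  proof -
    have "1/((RR+1) * dd t k) + 1/((RR+1) * dd t (Suc k)) \<le> \<bar>DD t\<bar>"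
      using nearL nearR DDabs by linarith
    moreover have "(1 / dd t k + 1 / dd t (Suc k)) / (RR+1) = 1/((RR+1) * dd t k) + 1/((RR+1) * dd t (Suc k))"
      by (simp add: add_divide_distrib mult.commute)
    ultimately have "(1 / dd t k + 1 / dd t (Suc k)) / (RR+1) \<le> \<bar>DD t\<bar>" by simp
    thus ?thesis using DDpos RR0 by (simp add: divide_le_eq mult.commute)
  qed
  have L: "berrut_lebesgue_fun x n t =
      (\<Sum>j\<in>{0..<k}. (1 / dd t j) / \<bar>DD t\<bar>) + (1 / dd t k + 1 / dd t (Suc k)) / \<bar>DD t\<bar>
       + (\<Sum>j\<in>{Suc (Suc k)..n}. (1 / dd t j) / \<bar>DD t\<bar>)"
    unfolding leb_eq sum_divide_distrib[symmetric] split4[OF k, of "\<lambda>j. 1 / dd t j"]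
    by (simp add: add_divide_distrib)
  have SumL: "(\<Sum>j\<in>{0..<k}. (1 / dd t j) / \<bar>DD t\<bar>) \<le> KL * harm n"
  proof -
    have "(\<Sum>j\<in>{0..<k}. (1 / dd t j) / \<bar>DD t\<bar>) \<le> (\<Sum>j\<in>{0..<k}. KL * (1 / real (k - j)))"
      using farL by (intro sum_mono) simp
    also have "\<dots> = KL * (\<Sum>j\<in>{0..<k}. 1 / real (k - j))" by (simp add: sum_distrib_left)
    also have "\<dots> \<le> KL * harm n"
    proof (intro mult_left_mono sum_inv_le_harm)
      show "inj_on (\<lambda>j. k - j) {0..<k}" by (auto simp: inj_on_def)
      show "(\<lambda>j. k - j) ` {0..<k} \<subseteq> {1..n}" using k by auto
      show "0 \<le> KL" unfolding KL_def using cCpos by simp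
    qed simp
    finally show ?thesis .
  qed
  have SumR: "(\<Sum>j\<in>{Suc (Suc k)..n}. (1 / dd t j) / \<bar>DD t\<bar>) \<le> KR * harm n"
  proof -
    have "(\<Sum>j\<in>{Suc (Suc k)..n}. (1 / dd t j) / \<bar>DD t\<bar>) \<le> (\<Sum>j\<in>{Suc (Suc k)..n}. KR * (1 / real (j - Suc k)))"
      using farR by (intro sum_mono) simp
    also have "\<dots> = KR * (\<Sum>j\<in>{Suc (Suc k)..n}. 1 / real (j - Suc k))" by (simp add: sum_distrib_left)
    also have "\<dots> \<le> KR * harm n"
    proof (intro mult_left_mono sum_inv_le_harm)
      show "inj_on (\<lambda>j. j - Suc k) {Suc (Suc k)..n}" by (auto simp: inj_on_def)
      show "(\<lambda>j. j - Suc k) ` {Suc (Suc k)..n} \<subseteq> {1..n}" by auto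
      show "0 \<le> KR" unfolding KR_def using cCpos by simp
    qed simp
    finally show ?thesis .
  qed
  have Lb: "berrut_lebesgue_fun x n t \<le> (RR + 1) + (KL + KR) * harm n"
    using L SumL SumR near by (simp add: algebra_simps)
  define P where "P = pi^2"
  define a where "a = real s + 1"
  define b where "b = real s + 3"
  have P0: "0 < P" unfolding P_def by simp
  have icC: "1/cC = P * b^2 / 16" unfolding cC_eq P_def b_def by simp
  have KK: "KL + KR = (1/cC) * (5 * P / 8 * a)"
    unfolding KL_def KR_def P_def a_def using cCpos by (simp add: field_simps)
  have KK0: "0 \<le> KL + KR" unfolding KK icC a_def using P0 by simp
  have RRP: "RR = a * b * P / 4" unfolding RR_def a_def b_def P_def by simp
  have l1: "1 \<le> ln (real n)" by (rule ln_n)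
  have H: "harm n \<le> 2 * ln (real n)" using harm_le_ln[of n] n3 l1 by simp
  have "(KL + KR) * harm n \<le> (KL + KR) * (2 * ln (real n))" using H KK0 by (intro mult_left_mono) auto
  also have "\<dots> \<le> RR * (pi^2 * (real s + 1) * ln (real n))"
  proof -
    have "(KL + KR) * 2 \<le> RR * (pi^2 * (real s + 1))"
    proof -
      have e: "RR * (P * a) - (KL + KR) * 2 = P * P * a * b / 64 * (16 * a - 5 * b)"
        unfolding RRP KK icC by (simp add: power2_eq_square algebra_simps)
      have "0 \<le> P * P * a * b / 64 * (16 * a - 5 * b)"
        using P0 unfolding a_def b_def by (intro mult_nonneg_nonneg) auto
      hence "(KL + KR) * 2 \<le> RR * (P * a)" using e by linarith
      thus ?thesis unfolding P_def a_def .
    qed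
    hence "((KL + KR) * 2) * ln (real n) \<le> (RR * (pi^2 * (real s + 1))) * ln (real n)"
      using l1 by (intro mult_right_mono) auto
    thus ?thesis by (simp add: algebra_simps)
  qed
  also have "\<dots> \<le> (RR + 1) * (pi^2 * (real s + 1) * ln (real n))"
    using l1 by (intro mult_right_mono) auto
  finally have "(KL + KR) * harm n \<le> (RR + 1) * (pi^2 * (real s + 1) * ln (real n))" .
  with Lb show ?thesis by (simp add: algebra_simps)
qed

end


lemma leb_eq_gen: "berrut_lebesgue_fun x n t =
   (\<Sum>j=0..n. 1 / \<bar>t - x j\<bar>) / \<bar>\<Sum>j=0..n. (-1)^j / (t - x j)\<bar>"
proof -
  have "berrut_lebesgue_fun x n t = (\<Sum>j=0..n. (1 / \<bar>t - x j\<bar>) / \<bar>\<Sum>j=0..n. (-1)^j / (t - x j)\<bar>)"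
    unfolding berrut_lebesgue_fun_def berrut_basis_def
    by (intro sum.cong) (auto simp: abs_mult power_abs)
  thus ?thesis by (simp add: sum_divide_distrib)
qed

lemma leb_reflect:
  "berrut_lebesgue_fun (\<lambda>j. - x (n - j)) n (-t) = berrut_lebesgue_fun x n t"
proof -
  have num: "(\<Sum>j=0..n. 1 / \<bar>-t - - x (n - j)\<bar>) = (\<Sum>j=0..n. 1 / \<bar>t - x j\<bar>)"
  proof -
    have "(\<Sum>j=0..n. 1 / \<bar>-t - - x (n - j)\<bar>) = (\<Sum>j=0..n. 1 / \<bar>t - x (n - j)\<bar>)"
      by (intro sum.cong) (auto simp: abs_minus_commute)
    also have "\<dots> = (\<Sum>j=0..n. 1 / \<bar>t - x j\<bar>)"
      using sum.atLeastAtMost_rev[of "\<lambda>j. 1 / \<bar>t - x j\<bar>" 0 n] by simp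
    finally show ?thesis .
  qed
  have den: "(\<Sum>j=0..n. (-1)^j / (-t - - x (n - j))) = - ((-1)^n * (\<Sum>j=0..n. (-1)^j / (t - x j)))"
  proof -
    have "(\<Sum>j=0..n. (-1)^j / (-t - - x (n - j))) = (\<Sum>i=0..n. (-1)^(n-i) / (-t - - x (n - (n - i))))"
      using sum.atLeastAtMost_rev[of "\<lambda>j. (-1)^j / (-t - - x (n - j))" 0 n] by simp
    also have "\<dots> = (\<Sum>i=0..n. (-1)^(n-i) / (-t - - x i))" by (intro sum.cong) auto
    also have "\<dots> = (\<Sum>i=0..n. - ((-1)^n * ((-1)^i / (t - x i))))"
    proof (rule sum.cong)
      fix i assume "i \<in> {0..n}"
      hence "(-1::real)^(n-i) = (-1)^n * (-1)^i" by (intro neg1_pow_diff) auto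
      moreover have "\<And>a. a / (-t - - x i) = - (a / (t - x i))"
      proof -
        fix a :: real
        have "-t - - x i = - (t - x i)" by simp
        thus "a / (-t - - x i) = - (a / (t - x i))" by (simp only: divide_minus_right)
      qed
      ultimately show "(-1)^(n-i) / (-t - - x i) = - ((-1)^n * ((-1)^i / (t - x i)))"
        by simp
    qed simp
    finally show ?thesis by (simp add: sum_negf sum_distrib_left)
  qed
  show ?thesis unfolding leb_eq_gen num den by (simp add: abs_mult power_abs)
qed

lemma cheb_reflect:
  assumes "cheb s N n x" shows "cheb s N n (\<lambda>j. - x (n - j))"
proof -
  interpret cheb s N n x by fact
  show ?thesis
  proof
    show "s + 2 < N" "n = N - s" using sN nN by auto
    show "\<forall>j\<le>n. \<exists>k\<le>N. - x (n - j) = cos (real k * pi / real N)"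
    proof (intro allI impI)
      fix j assume j: "j \<le> n"
      obtain k where k: "k \<le> N" "x (n - j) = cos (real k * pi / real N)"
        using nodes[rule_format, of "n - j"] by auto
      have "real (N - k) * pi / real N = pi - real k * pi / real N"
        using k Npos by (simp add: of_nat_diff field_simps)
      hence "cos (real (N - k) * pi / real N) = - x (n - j)" using k by simp
      thus "\<exists>k\<le>N. - x (n - j) = cos (real k * pi / real N)" by (intro exI[of _ "N - k"]) auto
    qed
    show "\<forall>j<n. - x (n - Suc j) < - x (n - j)"
      using x_dec by (simp add: Suc_diff_Suc)
  qed
qed

context cheb begin

definition BB :: real where "BB = (RR + 1) * (1 + pi^2 * (real s + 1) * ln (real n))"

lemma up_case:
  assumes "t \<le> 1"
    "x 0 < t \<or> (\<exists>k<n. x (Suc k) < t \<and> t < x k \<and>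
        arccos (x (Suc k)) - arccos t \<le> arccos t - arccos (x k))"
  shows "berrut_lebesgue_fun x n t \<le> BB"
  using assms caseA caseC unfolding BB_def by blast

end

lemma pointwise:
  assumes c: "cheb s N n x" and t: "-1 \<le> t" "t \<le> 1" and tn: "t \<notin> x ` {0..n}"
  shows "berrut_lebesgue_fun x n t \<le> cheb.BB s n"
proof -
  interpret cheb s N n x by fact
  define y where "y = (\<lambda>j. - x (n - j))"
  interpret Y: cheb s N n y unfolding y_def by (rule cheb_reflect[OF c])
  have BBy: "Y.BB = BB" unfolding Y.BB_def BB_def Y.RR_def RR_def by simp
  have refl: "berrut_lebesgue_fun y n (-t) = berrut_lebesgue_fun x n t"
    unfolding y_def by (rule leb_reflect)
  have mt: "-t \<le> 1" using t by simp
  have ne: "\<And>j. j \<le> n \<Longrightarrow> t \<noteq> x j" using tn by auto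
  show ?thesis
  proof (cases "x 0 < t")
    case True thus ?thesis using up_case t by auto
  next
    case False
    hence t0: "t < x 0" using ne[of 0] by linarith
    show ?thesis
    proof (cases "t < x n")
      case True
      have "y 0 < -t" unfolding y_def using True by simp
      hence "berrut_lebesgue_fun y n (-t) \<le> Y.BB" using Y.up_case mt by auto
      thus ?thesis using refl BBy by simp
    next
      case False
      hence tn': "x n < t" using ne[of n] by linarith
      define K where "K = {j. j \<le> n \<and> t < x j}"
      have fK: "finite K" unfolding K_def by simp
      have K0: "0 \<in> K" unfolding K_def using t0 by simp
      define k where "k = Max K"
      have kK: "k \<in> K" unfolding k_def using fK K0 Max_in by auto
      have kn: "k < n" using kK tn' unfolding K_def by (metis (mono_tags) le_neq_implies_less mem_Collect_eq not_less_iff_gr_or_eq)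
      have tk: "t < x k" using kK unfolding K_def by simp
      have "Suc k \<notin> K" using Max_ge[OF fK, of "Suc k"] unfolding k_def by auto
      hence "x (Suc k) \<le> t" using kn unfolding K_def by auto
      hence tk1: "x (Suc k) < t" using ne[of "Suc k"] kn by force
      show ?thesis
      proof (cases "arccos (x (Suc k)) - arccos t \<le> arccos t - arccos (x k)")
        case True
        thus ?thesis using up_case[of t] t kn tk tk1 by blast
      next
        case False
        define k' where "k' = n - Suc k"
        have e1: "y (Suc k') = - x k" "y k' = - x (Suc k)" unfolding y_def k'_def using kn by auto
        have xr: "-1 \<le> x k" "x k \<le> 1" "-1 \<le> x (Suc k)" "x (Suc k) \<le> 1"
          using x_ge x_le kn by auto
        have "arccos (y (Suc k')) - arccos (-t) \<le> arccos (-t) - arccos (y k')"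
          unfolding e1 using False xr t by (simp add: arccos_minus)
        moreover have "y (Suc k') < -t" "-t < y k'" unfolding e1 using tk tk1 by auto
        moreover have "k' < n" unfolding k'_def using kn by simp
        ultimately have "berrut_lebesgue_fun y n (-t) \<le> Y.BB" using Y.up_case[of "-t"] mt by blast
        thus ?thesis using refl BBy by simp
      qed
    qed
  qed
qed



lemma frac_le_ratio: fixes a b c d :: real
  assumes "0 < b" "0 < d" "a * d \<le> c * b" shows "a / b \<le> c / d"
  using assms by (simp add: field_simps)

theorem theorem7:
  fixes s N n :: nat and x :: "nat \<Rightarrow> real"
  assumes "s + 2 < N"
    and "n = N - s"
    and "\<forall>j\<le>n. \<exists>k\<le>N. x j = cos (real k * pi / real N)"
    and "\<forall>j<n. x (Suc j) < x j"
  shows "well_spaced_conds (pi^2 * (real s + 1) / 2)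
           ((real s + 1) * (real s + 3) * pi^2 / 4) x n
       \<and> berrut_lebesgue_const x n
           \<le> ((real s + 1) * (real s + 3) * pi^2 / 4 + 1)
             * (1 + pi^2 * (real s + 1) * ln (real N - real s))"
proof -
  have c: "cheb s N n x" using assms by unfold_locales
  interpret cheb s N n x by (rule c)
  have w1: "\<forall>k<n. \<forall>j\<le>k. (x (k+1) - x k) / (x (k+1) - x j) \<le> CC / (real k + 1 - real j)"
  proof (intro allI impI)
    fix k j assume k: "k < n" and j: "j \<le> k"
    have e: "(x (k+1) - x k) / (x (k+1) - x j) = (x k - x (k+1)) / (x j - x (k+1))"
      using minus_divide_divide[of "x k - x (k+1)" "x j - x (k+1)"] by simp
    have "x (Suc k) < x j" using x_dec[of j "Suc k"] j k by simp
    hence "(x k - x (k+1)) / (x j - x (k+1)) \<le> CC / (real k + 1 - real j)"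
      using cond1[OF j k] j by (intro frac_le_ratio) auto
    thus "(x (k+1) - x k) / (x (k+1) - x j) \<le> CC / (real k + 1 - real j)" using e by simp
  qed
  have w2: "\<forall>k<n. \<forall>j. k+1 \<le> j \<and> j \<le> n \<longrightarrow> (x (k+1) - x k) / (x j - x k) \<le> CC / (real j - real k)"
  proof (intro allI impI)
    fix k j assume k: "k < n" and j: "k+1 \<le> j \<and> j \<le> n"
    have e: "(x (k+1) - x k) / (x j - x k) = (x k - x (k+1)) / (x k - x j)"
      using minus_divide_divide[of "x k - x (k+1)" "x k - x j"] by simp
    have "x j < x k" using x_dec[of k j] j by simp
    hence "(x k - x (k+1)) / (x k - x j) \<le> CC / (real j - real k)"
      using cond2[of k j] j by (intro frac_le_ratio) auto
    thus "(x (k+1) - x k) / (x j - x k) \<le> CC / (real j - real k)" using e by simp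
  qed
  have w3: "\<forall>k. 1 \<le> k \<and> k \<le> n-1 \<longrightarrow>
        1 / RR \<le> (x (k+1) - x k) / (x k - x (k-1)) \<and> (x (k+1) - x k) / (x k - x (k-1)) \<le> RR"
  proof (intro allI impI)
    fix k assume k: "1 \<le> k \<and> k \<le> n-1"
    then obtain k' where k': "k = Suc k'" "Suc k' < n" using n3 by (cases k) auto
    have e: "(x (k+1) - x k) / (x k - x (k-1)) = (x k - x (k+1)) / (x (k-1) - x k)"
      using minus_divide_divide[of "x k - x (k+1)" "x (k-1) - x k"] by simp
    have p1: "0 < x (k-1) - x k" "0 < x k - x (k+1)" using x_dec[of k' k] x_dec[of k "k+1"] k' by auto
    have RRpos: "0 < RR" unfolding RR_def by simp
    have "(x k - x (k+1)) / (x (k-1) - x k) \<le> RR / 1"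
      using cond3(1)[of k'] k' p1 by (intro frac_le_ratio) auto
    moreover have "1 / RR \<le> (x k - x (k+1)) / (x (k-1) - x k)"
      using cond3(2)[of k'] k' p1 RRpos by (intro frac_le_ratio) (auto simp: mult.commute)
    ultimately show "1 / RR \<le> (x (k+1) - x k) / (x k - x (k-1)) \<and> (x (k+1) - x k) / (x k - x (k-1)) \<le> RR"
      using e by simp
  qed
  have W: "well_spaced_conds CC RR x n" unfolding well_spaced_conds_def using w1 w2 w3 by blast
  have nreal: "real N - real s = real n" using assms(1,2) by simp
  have ne: "{-1..1::real} - x ` {0..n} \<noteq> {}"
  proof
    assume "{-1..1::real} - x ` {0..n} = {}"
    hence "{-1..1::real} \<subseteq> x ` {0..n}" by auto
    hence "finite {-1..1::real}" by (rule finite_subset) auto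
    thus False using infinite_Icc[of "-1::real" 1] by simp
  qed
  have Lc: "berrut_lebesgue_const x n \<le> BB"
    unfolding berrut_lebesgue_const_def
  proof (rule cSup_least)
    show "berrut_lebesgue_fun x n ` ({-1..1} - x ` {0..n}) \<noteq> {}" using ne by simp
    fix y assume "y \<in> berrut_lebesgue_fun x n ` ({-1..1} - x ` {0..n})"
    then obtain t where "t \<in> {-1..1}" "t \<notin> x ` {0..n}" "y = berrut_lebesgue_fun x n t" by auto
    thus "y \<le> BB" using pointwise[OF c] by auto
  qed
  show ?thesis using W Lc unfolding CC_def RR_def BB_def nreal by simp
qed


end
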